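(* Work in Minkowski space $\mathbb{R}^{3,1}$ with metric $\eta=\operatorname{diag}(-1,1,1,1)$, indices lowered with $\eta$. For a nonzero 4-vector $k$, let $S_k$ be the set of symmetric tensors $$T_{\mu\nu}=u_\mu u_\nu+(u^\lambda u_\lambda)\,d_\mu d_\nu$$ where $u=(1,\vec v)$ with $|\vec v|\le1$, $d=(0,\hat d)$ with $|\hat d|=1$ and $\hat d\cdot\vec v=0$, and $u^\mu k_\mu=d^\mu k_\mu=0$. Then: (i) every $T\in S_k$ satisfies $k^\mu T_{\mu\nu}=0$; (ii) if $k$ is timelike, $S_k=\emptyset$; (iii) if $k$ is spacelike, the real linear span of $S_k$ equals the space of all symmetric tensors $T_{\mu\nu}$ with $k^\mu T_{\mu\nu}=0$; (iv) if $k$ is null, the real linear span of $S_k$ is the one-dimensional space $\mathbb{R}\,k_\mu k_\nu$; in particular for every null $l$, $l^\mu T_{\mu\nu}$ is non-spacelike for every $T$ in this span. *)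

theory Defs
  imports "HOL-Analysis.Analysis" "HOL-Library.Numeral_Type"
begin

text \<open>Minkowski space R^{3,1}: 4-vectors are real^4, index 0 is time,
  indices 1,2,3 are spatial. Vectors are given by upper-index components.
  Tensors T_{mu nu} (lower indices) are real^4^4 with T $ mu $ nu.\<close>

definition eta :: "4 \<Rightarrow> real" where
  "eta i = (if i = 0 then -1 else 1)"

definition lower :: "real^4 \<Rightarrow> real^4" where
  "lower u = (\<chi> i. eta i * u $ i)"

definition raise :: "real^4 \<Rightarrow> real^4" where
  "raise w = (\<chi> i. eta i * w $ i)"

definition mdot :: "real^4 \<Rightarrow> real^4 \<Rightarrow> real" where
  "mdot u w = (\<Sum>i\<in>UNIV. u $ i * (lower w) $ i)"

definition timelike :: "real^4 \<Rightarrow> bool" where "timelike k \<longleftrightarrow> mdot k k < 0"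
definition spacelike :: "real^4 \<Rightarrow> bool" where "spacelike k \<longleftrightarrow> mdot k k > 0"
definition null :: "real^4 \<Rightarrow> bool" where "null k \<longleftrightarrow> mdot k k = 0"

definition spatial_dot :: "real^4 \<Rightarrow> real^4 \<Rightarrow> real" where
  "spatial_dot a b = (\<Sum>i\<in>{1,2,3::4}. a $ i * b $ i)"

text \<open>Contraction k^mu T_{mu nu} (result has a lower index nu).\<close>
definition contr :: "real^4 \<Rightarrow> real^4^4 \<Rightarrow> real^4" where
  "contr k T = (\<chi> nu. \<Sum>mu\<in>UNIV. k $ mu * T $ mu $ nu)"

definition symmetric_tensor :: "real^4^4 \<Rightarrow> bool" where
  "symmetric_tensor T \<longleftrightarrow> (\<forall>mu nu. T $ mu $ nu = T $ nu $ mu)"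

definition Tud :: "real^4 \<Rightarrow> real^4 \<Rightarrow> real^4^4" where
  "Tud u d = (\<chi> mu nu. (lower u) $ mu * (lower u) $ nu
                       + mdot u u * (lower d) $ mu * (lower d) $ nu)"

definition S :: "real^4 \<Rightarrow> (real^4^4) set" where
  "S k = {T. \<exists>u d. u $ 0 = 1 \<and> spatial_dot u u \<le> 1
              \<and> d $ 0 = 0 \<and> spatial_dot d d = 1 \<and> spatial_dot d u = 0
              \<and> mdot u k = 0 \<and> mdot d k = 0 \<and> T = Tud u d}"

end

theory Submission
  imports Defs
begin

lemma sum4: "sum f (UNIV::4 set) = f 0 + f 1 + f 2 + f 3"
proof -
  have h: "(4::4) = 0" by simp
  show ?thesis using sum_4[of f] unfolding h by (simp add: ac_simps)
qed

lemma all4: "(\<forall>i::4. P i) \<longleftrightarrow> P 0 \<and> P 1 \<and> P 2 \<and> P 3"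
proof -
  have h: "(4::4) = 0" by simp
  show ?thesis using forall_4[of P] unfolding h by auto
qed

lemma md: "mdot u w = - u$0*w$0 + u$1*w$1 + u$2*w$2 + u$3*w$3"
  by (simp add: mdot_def lower_def eta_def sum4)
lemma sd: "spatial_dot a b = a$1*b$1+a$2*b$2+a$3*b$3"
  by (simp add: spatial_dot_def)
lemma lower_c[simp]: "lower u $ 0 = - u$0" "lower u $ 1 = u$1" "lower u $ 2 = u$2" "lower u $ 3 = u$3"
  by (simp_all add: lower_def eta_def)
lemma raise_c[simp]: "raise u $ 0 = - u$0" "raise u $ 1 = u$1" "raise u $ 2 = u$2" "raise u $ 3 = u$3"
  by (simp_all add: raise_def eta_def)
lemma contr_c: "contr k T $ n = k$0 * T$0$n + k$1 * T$1$n + k$2 * T$2$n + k$3 * T$3$n"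
  by (simp add: contr_def sum4)
lemma vec4_eq: "(x::real^4) = y \<longleftrightarrow> x$0 = y$0 \<and> x$1 = y$1 \<and> x$2=y$2 \<and> x$3 = y$3"
  by (simp add: vec_eq_iff all4)
lemma ten_eq: "(x::real^4^4) = y \<longleftrightarrow> (\<forall>j. x$0$j = y$0$j) \<and> (\<forall>j. x$1$j = y$1$j) \<and> (\<forall>j. x$2$j=y$2$j) \<and> (\<forall>j. x$3$j = y$3$j)"
  by (simp add: vec_eq_iff all4)

lemma mdot_sym: "mdot u w = mdot w u" by (simp add: md)

lemma contr_Tud: "contr k (Tud u d) $ n = mdot u k * lower u $ n + mdot u u * mdot d k * lower d $ n"
  by (simp add: contr_c Tud_def md algebra_simps)

lemma part1: "T \<in> S k \<Longrightarrow> contr k T = 0"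
  unfolding S_def by (subst vec_eq_iff) (auto simp: contr_Tud)

lemma lagrange3: "(a1*b1+a2*b2+a3*b3)^2 \<le> (a1*a1+a2*a2+a3*a3)*(b1*b1+b2*b2+b3*b3::real)"
proof -
  have "(a1*a1+a2*a2+a3*a3)*(b1*b1+b2*b2+b3*b3) - (a1*b1+a2*b2+a3*b3)^2
     = (a1*b2-a2*b1)^2+(a1*b3-a3*b1)^2+(a2*b3-a3*b2)^2" by (simp add: power2_eq_square algebra_simps)
  moreover have "(a1*b2-a2*b1)^2+(a1*b3-a3*b1)^2+(a2*b3-a3*b2)^2 \<ge> 0" by simp
  ultimately show ?thesis by linarith
qed

lemma part2: assumes "timelike k" shows "S k = {}"
proof (rule ccontr)
  assume "S k \<noteq> {}"
  then obtain u where u: "u$0 = 1" "spatial_dot u u \<le> 1" "mdot u k = 0" unfolding S_def by blast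
  let ?K = "k$1*k$1+k$2*k$2+k$3*k$3"
  have K0: "?K \<ge> 0" by simp
  have e: "k$0 = u$1*k$1+u$2*k$2+u$3*k$3" using u(1,3) by (simp add: md)
  have "(k$0)^2 \<le> (u$1*u$1+u$2*u$2+u$3*u$3) * ?K" unfolding e by (rule lagrange3)
  also have "\<dots> \<le> 1 * ?K" using u(2) K0 by (intro mult_right_mono) (auto simp: sd)
  finally have "(k$0)^2 \<le> ?K" by simp
  moreover have "?K < (k$0)^2" using assms by (simp add: timelike_def md power2_eq_square)
  ultimately show False by linarith
qed

definition v4 :: "real \<Rightarrow> real \<Rightarrow> real \<Rightarrow> real \<Rightarrow> real^4" where
  "v4 a b c d = (\<chi> i. if i = 0 then a else if i = 1 then b else if i = 2 then c else d)"
lemma v4_c[simp]: "v4 a b c d $ 0 = a" "v4 a b c d $ 1 = b" "v4 a b c d $ 2 = c" "v4 a b c d $ 3 = d"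
  by (simp_all add: v4_def)

lemma perp_exists: "\<exists>d. d$0 = 0 \<and> spatial_dot d d = 1 \<and> d$1*K1+d$2*K2+d$3*K3 = 0"
proof (cases "K1 = 0 \<and> K2 = 0")
  case True
  then show ?thesis by (intro exI[of _ "v4 0 1 0 0"]) (simp add: sd)
next
  case False
  define r where "r = sqrt (K1^2+K2^2)"
  have "K1^2+K2^2 > 0" using False by (auto simp: add_pos_pos sum_power2_gt_zero_iff)
  then have r: "r > 0" "r^2 = K1^2+K2^2" "K1*K1+K2*K2 \<noteq> 0" unfolding r_def by (auto simp: power2_eq_square)
  have "(-K2/r)*(-K2/r) + (K1/r)*(K1/r) = (K1*K1+K2*K2)/(r*r)" by (simp add: divide_simps)
  also have "\<dots> = 1" using r by (simp add: power2_eq_square)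
  finally have "(-K2/r)*(-K2/r) + (K1/r)*(K1/r) = 1" .
  moreover have "(-K2/r)*K1 + (K1/r)*K2 = 0" by (simp add: field_simps)
  ultimately show ?thesis
    by (intro exI[of _ "v4 0 (-K2/r) (K1/r) 0"]) (simp add: sd)
qed

lemma lower_v4: "lower (v4 a b c d) = v4 (-a) b c d" by (simp add: vec4_eq)

definition XX :: "real^4 \<Rightarrow> real^4^4" where "XX k = (\<chi> mu nu. (lower k) $ mu * (lower k) $ nu)"

lemma null_k0: assumes "null k" "k \<noteq> 0" shows "k$0 \<noteq> 0"
proof
  assume h: "k$0 = 0"
  then have "k$1*k$1+k$2*k$2+k$3*k$3 = 0" using assms(1) by (simp add: null_def md)
  moreover have "k$1*k$1 \<ge> 0" "k$2*k$2 \<ge> 0" "k$3*k$3 \<ge> 0" by simp_all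
  ultimately have "k$1*k$1 = 0 \<and> k$2*k$2 = 0 \<and> k$3*k$3 = 0" by linarith
  then have "k$1 = 0 \<and> k$2 = 0 \<and> k$3 = 0" by simp
  then show False using h assms(2) by (simp add: vec4_eq)
qed

lemma null_S: assumes "null k" "k \<noteq> 0" shows "S k = {(1/(k$0)^2) *\<^sub>R XX k}"
proof -
  have k0: "k$0 \<noteq> 0" using null_k0 assms by blast
  have n: "k$1*k$1+k$2*k$2+k$3*k$3 = k$0*k$0" using assms(1) by (simp add: null_def md)
  have sub: "T = (1/(k$0)^2) *\<^sub>R XX k" if TS: "T \<in> S k" for T
  proof -
    obtain u d where u: "u$0 = 1" "spatial_dot u u \<le> 1" "mdot u k = 0" and T: "T = Tud u d"
      using TS unfolding S_def by blast
    have e: "k$0 = u$1*k$1+u$2*k$2+u$3*k$3" using u(1,3) by (simp add: md)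
    have "(k$0*u$1-k$1)^2+(k$0*u$2-k$2)^2+(k$0*u$3-k$3)^2
      = (k$0)^2*(u$1*u$1+u$2*u$2+u$3*u$3) - 2*k$0*(u$1*k$1+u$2*k$2+u$3*k$3) + (k$1*k$1+k$2*k$2+k$3*k$3)"
      by (simp add: power2_eq_square algebra_simps)
    also have "\<dots> = (k$0)^2*(u$1*u$1+u$2*u$2+u$3*u$3 - 1)" unfolding e[symmetric] n by (simp add: power2_eq_square algebra_simps)
    also have "\<dots> \<le> 0" using u(2) by (simp add: sd mult_nonneg_nonpos)
    finally have "(k$0*u$1-k$1)^2+(k$0*u$2-k$2)^2+(k$0*u$3-k$3)^2 \<le> 0" .
    moreover have "(k$0*u$1-k$1)^2 \<ge> 0" "(k$0*u$2-k$2)^2 \<ge> 0" "(k$0*u$3-k$3)^2 \<ge> 0" by simp_all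
    ultimately have "(k$0*u$1-k$1)^2 = 0" "(k$0*u$2-k$2)^2 = 0" "(k$0*u$3-k$3)^2 = 0" by linarith+
    then have "k$0*u$1-k$1 = 0" "k$0*u$2-k$2 = 0" "k$0*u$3-k$3 = 0" by simp_all
    then have ui: "u$1 = k$1/k$0" "u$2 = k$2/k$0" "u$3 = k$3/k$0" using k0 by (auto simp: field_simps)
    have uu: "mdot u u = 0" using k0 n by (simp add: md u(1) ui field_simps)
    show ?thesis unfolding T using k0
      by (simp add: ten_eq all4 Tud_def XX_def uu u(1) ui field_simps power2_eq_square)
  qed
  obtain d where d: "d$0 = 0" "spatial_dot d d = 1" "d$1*k$1+d$2*k$2+d$3*k$3 = 0"
    using perp_exists by blast
  define u where "u = v4 1 (k$1/k$0) (k$2/k$0) (k$3/k$0)"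
  have mem: "Tud u d \<in> S k" unfolding S_def
  proof (intro CollectI exI conjI)
    show "spatial_dot u u \<le> 1" using k0 n by (simp add: u_def sd field_simps)
    show "spatial_dot d u = 0" using k0 d(3) by (simp add: u_def sd field_simps)
    show "mdot u k = 0" using k0 n by (simp add: u_def md field_simps)
    show "mdot d k = 0" using d by (simp add: md)
  qed (use d in \<open>auto simp: u_def\<close>)
  have eq: "Tud u d = (1/(k$0)^2) *\<^sub>R XX k" by (rule sub[OF mem])
  have A: "S k \<subseteq> {(1/(k$0)^2) *\<^sub>R XX k}" using sub by blast
  show ?thesis using A mem eq by (metis empty_iff subset_singletonD)
qed


definition outer :: "real^4 \<Rightarrow> real^4 \<Rightarrow> real^4^4" where "outer x y = (\<chi> i j. x$i * y$j)"
definition TF :: "real^4^4 \<Rightarrow> real^4^4 \<Rightarrow> real^4^4" where "TF m T = m ** T ** transpose m"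

lemma Tud_outer: "Tud u d = outer (lower u) (lower u) + mdot u u *\<^sub>R outer (lower d) (lower d)"
  by (simp add: Tud_def outer_def vec_eq_iff)

lemma TF_outer: "TF m (outer x y) = outer (m *v x) (m *v y)"
  by (simp add: TF_def outer_def vec_eq_iff matrix_matrix_mult_def matrix_vector_mult_def transpose_def sum4 algebra_simps)

lemma TF_linear: "linear (TF m)"
  by (rule linearI) (simp_all add: TF_def vec_eq_iff matrix_matrix_mult_def transpose_def sum4 algebra_simps)

lemma contr_mv: "contr x T = transpose T *v x"
  by (simp add: contr_def vec_eq_iff matrix_vector_mult_def transpose_def mult.commute)

lemma sym_transpose: "symmetric_tensor T \<longleftrightarrow> transpose T = T"
  by (auto simp: symmetric_tensor_def vec_eq_iff transpose_def)

lemma mdot_sd: "mdot x y = spatial_dot x y - x$0*y$0" by (simp add: md sd)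

definition good :: "real^4^4 \<Rightarrow> bool" where
  "good m \<longleftrightarrow> transpose m = m \<and> m ** m = mat 1 \<and> (\<forall>x. (m *v x)$0 = x$0)
     \<and> (\<forall>x y. spatial_dot (m *v x) (m *v y) = spatial_dot x y) \<and> (\<forall>x. lower (m *v x) = m *v lower x)"

definition target :: "real^4 \<Rightarrow> (real^4^4) set" where
  "target k = {T. symmetric_tensor T \<and> contr k T = 0}"

context fixes m :: "real^4^4" assumes g: "good m"
begin

lemma g_t: "transpose m = m" and g_sq: "m ** m = mat 1" and g_0: "(m *v x)$0 = x$0"
  and g_sd: "spatial_dot (m *v x) (m *v y) = spatial_dot x y" and g_low: "lower (m *v x) = m *v lower x"
  using g by (auto simp: good_def)

lemma g_inv: "m *v (m *v x) = x"
  by (simp add: matrix_vector_mul_assoc g_sq)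

lemma g_md: "mdot (m *v x) (m *v y) = mdot x y"
  by (simp add: mdot_sd g_sd g_0)

lemma g_Tud: "Tud (m *v u) (m *v d) = TF m (Tud u d)"
  using linear_add[OF TF_linear] linear_scale[OF TF_linear]
  by (simp add: Tud_outer g_low TF_outer g_md)

lemma g_contr: "contr (m *v x) (TF m T) = m *v contr x T"
proof -
  have "transpose (TF m T) = m ** transpose T ** m"
    by (simp add: TF_def g_t matrix_transpose_mul matrix_mul_assoc)
  then have "contr (m *v x) (TF m T) = (m ** transpose T ** (m ** m)) *v x"
    by (simp add: contr_mv matrix_vector_mul_assoc matrix_mul_assoc)
  also have "\<dots> = m *v contr x T" by (simp add: g_sq contr_mv flip: matrix_vector_mul_assoc)
  finally show ?thesis .
qed

lemma g_TFinv: "TF m (TF m T) = T"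
proof -
  have "TF m (TF m T) = (m ** m) ** T ** (m ** m)" by (simp add: TF_def g_t matrix_mul_assoc)
  then show ?thesis by (simp add: g_sq)
qed

lemma g_sym: "symmetric_tensor T \<Longrightarrow> symmetric_tensor (TF m T)"
  by (simp add: sym_transpose TF_def g_t matrix_transpose_mul matrix_mul_assoc)

lemma g_S1: "TF m ` S k \<subseteq> S (m *v k)"
proof
  fix T assume "T \<in> TF m ` S k"
  then obtain u d where u: "u $ 0 = 1" "spatial_dot u u \<le> 1"
              "d $ 0 = 0" "spatial_dot d d = 1" "spatial_dot d u = 0"
              "mdot u k = 0" "mdot d k = 0" and T: "T = TF m (Tud u d)" unfolding S_def by blast
  show "T \<in> S (m *v k)" unfolding S_def
    by (rule CollectI, rule exI[of _ "m *v u"], rule exI[of _ "m *v d"]) (simp add: g_0 g_sd g_md u T g_Tud)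
qed

lemma g_S: "S (m *v k) = TF m ` S k"
proof
  show "TF m ` S k \<subseteq> S (m *v k)" by (rule g_S1)
  have "TF m ` S (m *v k) \<subseteq> S (m *v (m *v k))" by (rule g_S1)
  then have "TF m ` TF m ` S (m *v k) \<subseteq> TF m ` S k" by (simp add: g_inv image_mono)
  then show "S (m *v k) \<subseteq> TF m ` S k" by (simp add: image_image g_TFinv)
qed

lemma g_target1: "TF m ` target k \<subseteq> target (m *v k)"
  by (auto simp: target_def g_sym g_contr)

lemma g_target: "target (m *v k) = TF m ` target k"
proof
  show "TF m ` target k \<subseteq> target (m *v k)" by (rule g_target1)
  have "TF m ` target (m *v k) \<subseteq> target (m *v (m *v k))" by (rule g_target1)
  then have "TF m ` TF m ` target (m *v k) \<subseteq> TF m ` target k" by (simp add: g_inv image_mono)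
  then show "target (m *v k) \<subseteq> TF m ` target k" by (simp add: image_image g_TFinv)
qed

lemma g_span: "span (S k) = target k \<Longrightarrow> span (S (m *v k)) = target (m *v k)"
  by (simp add: g_S g_target span_linear_image[OF TF_linear])

end

lemma inner4: "inner (x::real^4) y = x$0*y$0 + x$1*y$1+x$2*y$2+x$3*y$3"
  by (simp add: inner_vec_def sum4)

lemma hh_mv: 
  shows "(mat 1 - s *\<^sub>R outer w w) *v x = x - (s*inner w x) *\<^sub>R w"
  by (simp add: vec4_eq matrix_vector_mult_def sum4 mat_def outer_def inner4 algebra_simps)


lemma good_id: "good (mat 1)"
  by (simp add: good_def)

lemma hh_good: assumes w0: "w$0 = 0" and ww: "inner w w \<noteq> 0" and sdef: "s = 2 / inner w w"
  shows "good (mat 1 - s *\<^sub>R outer w w)"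
proof -
  let ?m = "mat 1 - s *\<^sub>R outer w w"
  have sw: "s * inner w w = 2" using ww sdef by simp
  have tr: "transpose ?m = ?m"
    by (simp add: ten_eq all4 transpose_def mat_def outer_def mult.commute)
  have inv: "?m *v (?m *v x) = x" for x
  proof -
    have e: "s*(inner w x - (s*inner w x)*inner w w) = - (s*inner w x)"
    proof -
      have "s*(inner w x - (s*inner w x)*inner w w) = s*inner w x - (s*inner w w)*(s*inner w x)" by (simp add: algebra_simps)
      then show ?thesis unfolding sw by simp
    qed
    have "?m *v (?m *v x) = x - (s*inner w x) *\<^sub>R w - (s*(inner w x - (s*inner w x)*inner w w)) *\<^sub>R w"
      unfolding hh_mv by (simp add: inner_diff_right)
    then show ?thesis unfolding e by simp
  qed
  have sq: "?m ** ?m = mat 1"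
    by (subst matrix_eq) (simp add: inv flip: matrix_vector_mul_assoc)
  have c0: "(?m *v x)$0 = x$0" for x unfolding hh_mv by (simp add: w0)
  have inn: "inner (?m *v x) (?m *v y) = inner x y" for x y
  proof -
    have "inner (?m *v x) (?m *v y) = inner x y - 2 * s * inner w x * inner w y + (s * inner w w) * s * inner w x * inner w y"
      unfolding hh_mv by (simp add: inner_diff_left inner_diff_right inner_commute algebra_simps)
    then show ?thesis unfolding sw by simp
  qed
  have sdi: "spatial_dot x y = inner x y - x$0*y$0" for x y by (simp add: sd inner4)
  have spd: "spatial_dot (?m *v x) (?m *v y) = spatial_dot x y" for x y by (simp add: sdi inn c0)
  have low: "lower (?m *v x) = ?m *v lower x" for x
    unfolding hh_mv by (simp add: vec4_eq inner4 w0 algebra_simps)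
  show ?thesis unfolding good_def using tr sq c0 spd low by blast
qed

lemma reduce: assumes "spacelike k"
  shows "\<exists>m k0 c. good m \<and> m *v v4 k0 0 0 c = k \<and> \<bar>k0\<bar> < c"
proof -
  define c where "c = sqrt (k$1^2+k$2^2+k$3^2)"
  have c2: "c^2 = k$1^2+k$2^2+k$3^2" "c \<ge> 0" unfolding c_def by auto
  have "(k$0)^2 < c^2" using assms c2 by (simp add: spacelike_def md power2_eq_square)
  then have lt: "\<bar>k$0\<bar> < c" using c2(2) by (simp add: power2_less_imp_less abs_less_iff) 
  define kc where "kc = v4 (k$0) 0 0 c"
  show ?thesis
  proof (cases "kc = k")
    case True
    then show ?thesis using good_id lt unfolding kc_def by (intro exI[of _ "mat 1"] exI[of _ "k$0"] exI[of _ c]) simp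
  next
    case False
    define w where "w = kc - k"
    have w0: "w$0 = 0" by (simp add: w_def kc_def)
    have wn: "w \<noteq> 0" using False by (simp add: w_def)
    then have ww: "inner w w \<noteq> 0" by simp
    define s where "s = 2 / inner w w"
    have nn: "inner kc kc = inner k k" using c2 by (simp add: kc_def inner4 power2_eq_square)
    have "inner w w = 2 * inner w kc"
      by (simp add: w_def inner_diff_left inner_diff_right nn inner_commute)
    then have "s * inner w kc = 1" using ww by (simp add: s_def)
    then have "(mat 1 - s *\<^sub>R outer w w) *v kc = k" by (simp add: hh_mv w_def)
    then show ?thesis using hh_good[OF w0 ww s_def] lt unfolding kc_def
      by (intro exI[of _ "mat 1 - s *\<^sub>R outer w w"] exI[of _ "k$0"] exI[of _ c]) simp
  qed
qed



lemma canon: assumes lt: "\<bar>k0\<bar> < c"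
  shows "target (v4 k0 0 0 c) \<subseteq> span (S (v4 k0 0 0 c))"
proof
  define kc where "kc = v4 k0 0 0 c"
  have cpos: "c > 0" using lt by linarith
  define a where "a = k0 / c"
  have "\<bar>a\<bar> = \<bar>k0\<bar> / c" using cpos by (simp add: a_def abs_divide)
  also have "\<dots> < 1" using lt cpos by simp
  finally have "\<bar>a\<bar> < 1" .
  then have a2: "a*a < 1" using abs_square_less_1[of a] by (simp add: power2_eq_square)
  define \<rho> where "\<rho> = sqrt (1 - a*a)"
  have \<rho>: "\<rho> > 0" "\<rho>*\<rho> = 1 - a*a" using a2 unfolding \<rho>_def by simp_all
  have ka: "k0 = a * c" using cpos by (simp add: a_def)
  define E where "E x y = Tud (v4 1 (\<rho>*x) (\<rho>*y) a) (v4 0 (-y) x 0)" for x y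
  define E6 where "E6 = Tud (v4 1 0 0 a) (v4 0 1 0 0)"
  have E_in: "E x y \<in> S kc" if xy: "x*x+y*y = 1" for x y
    unfolding E_def S_def
  proof (intro CollectI exI conjI)
    have "\<rho>*x*(\<rho>*x) + \<rho>*y*(\<rho>*y) + a*a = \<rho>*\<rho>*(x*x+y*y) + a*a" by (simp add: algebra_simps)
    also have "\<dots> = 1" using xy \<rho>(2) by simp
    finally show "spatial_dot (v4 1 (\<rho>*x) (\<rho>*y) a) (v4 1 (\<rho>*x) (\<rho>*y) a) \<le> 1" by (simp add: sd)
    show "spatial_dot (v4 0 (-y) x 0) (v4 0 (-y) x 0) = 1" using xy by (simp add: sd algebra_simps)
    show "spatial_dot (v4 0 (-y) x 0) (v4 1 (\<rho>*x) (\<rho>*y) a) = 0" by (simp add: sd algebra_simps)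
    show "mdot (v4 1 (\<rho>*x) (\<rho>*y) a) kc = 0" by (simp add: md kc_def ka)
    show "mdot (v4 0 (-y) x 0) kc = 0" by (simp add: md kc_def)
  qed simp_all
  have E6_in: "E6 \<in> S kc"
    unfolding E6_def S_def
  proof (intro CollectI exI conjI)
    show "spatial_dot (v4 1 0 0 a) (v4 1 0 0 a) \<le> 1" using a2 by (simp add: sd)
    show "mdot (v4 1 0 0 a) kc = 0" by (simp add: md kc_def ka)
  qed (simp_all add: sd md kc_def)
  define p where "p = v4 1 0 0 (-a)"
  define e1 where "e1 = v4 0 1 0 0"
  define e2 where "e2 = v4 0 0 1 0"
  have Eo: "E x y = outer (v4 (-1) (\<rho>*x) (\<rho>*y) a) (v4 (-1) (\<rho>*x) (\<rho>*y) a)" if xy: "x*x+y*y = 1" for x y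
  proof -
    have "mdot (v4 1 (\<rho>*x) (\<rho>*y) a) (v4 1 (\<rho>*x) (\<rho>*y) a) = -1 + \<rho>*\<rho>*(x*x+y*y) + a*a"
      by (simp add: md algebra_simps)
    also have "\<dots> = 0" using xy \<rho>(2) by simp
    finally show ?thesis unfolding E_def Tud_outer by (simp add: lower_v4)
  qed
  have E6o: "E6 = outer (v4 (-1) 0 0 a) (v4 (-1) 0 0 a) - (\<rho>*\<rho>) *\<^sub>R outer e1 e1"
  proof -
    have "mdot (v4 1 0 0 a) (v4 1 0 0 a) = - (\<rho>*\<rho>)" using \<rho>(2) by (simp add: md)
    then show ?thesis unfolding E6_def Tud_outer e1_def by (simp add: lower_v4)
  qed
  have E1: "E 1 0 = outer (v4 (-1) \<rho> 0 a) (v4 (-1) \<rho> 0 a)" using Eo[of 1 0] by simp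
  have E2: "E (-1) 0 = outer (v4 (-1) (-\<rho>) 0 a) (v4 (-1) (-\<rho>) 0 a)" using Eo[of "-1" 0] by simp
  have E3: "E 0 1 = outer (v4 (-1) 0 \<rho> a) (v4 (-1) 0 \<rho> a)" using Eo[of 0 1] by simp
  have E4: "E 0 (-1) = outer (v4 (-1) 0 (-\<rho>) a) (v4 (-1) 0 (-\<rho>) a)" using Eo[of 0 "-1"] by simp
  have E5: "E (3/5) (4/5) = outer (v4 (-1) (\<rho>*(3/5)) (\<rho>*(4/5)) a) (v4 (-1) (\<rho>*(3/5)) (\<rho>*(4/5)) a)"
    using Eo[of "3/5" "4/5"] by simp
  have s1: "E 1 0 \<in> span (S kc)" "E (-1) 0 \<in> span (S kc)" "E 0 1 \<in> span (S kc)" "E 0 (-1) \<in> span (S kc)"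
     "E (3/5) (4/5) \<in> span (S kc)" "E6 \<in> span (S kc)"
    by (auto intro!: span_base E_in E6_in)
  define G00 where "G00 = outer p p"
  define G01 where "G01 = outer p e1 + outer e1 p"
  define G02 where "G02 = outer p e2 + outer e2 p"
  define G11 where "G11 = outer e1 e1"
  define G12 where "G12 = outer e1 e2 + outer e2 e1"
  define G22 where "G22 = outer e2 e2"
  have "G00 = (1/4) *\<^sub>R (E 1 0 + E (-1) 0) + (1/2) *\<^sub>R E6"
    unfolding E1 E2 E6o G00_def p_def e1_def by (simp add: ten_eq all4 outer_def)
  then have g00: "G00 \<in> span (S kc)" using s1 by (simp add: span_add span_scale)
  have "G11 = (1/(4*\<rho>*\<rho>)) *\<^sub>R (E 1 0 + E (-1) 0) - (1/(2*\<rho>*\<rho>)) *\<^sub>R E6"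
    unfolding E1 E2 E6o G11_def p_def e1_def using \<rho> by (simp add: ten_eq all4 outer_def field_simps)
  then have g11: "G11 \<in> span (S kc)" using s1 by (simp add: span_add span_scale span_diff)
  have "G01 = (1/(2*\<rho>)) *\<^sub>R (E (-1) 0 - E 1 0)"
    unfolding E1 E2 G01_def p_def e1_def using \<rho> by (simp add: ten_eq all4 outer_def field_simps)
  then have g01: "G01 \<in> span (S kc)" using s1 by (simp add: span_add span_scale span_diff)
  have "G02 = (1/(2*\<rho>)) *\<^sub>R (E 0 (-1) - E 0 1)"
    unfolding E3 E4 G02_def p_def e2_def using \<rho> by (simp add: ten_eq all4 outer_def field_simps)
  then have g02: "G02 \<in> span (S kc)" using s1 by (simp add: span_add span_scale span_diff)
  have "G22 = (1/(2*\<rho>*\<rho>)) *\<^sub>R (E 0 1 + E 0 (-1)) - (1/(\<rho>*\<rho>)) *\<^sub>R G00"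
    unfolding E3 E4 G22_def G00_def p_def e2_def using \<rho> by (simp add: ten_eq all4 outer_def field_simps)
  then have g22: "G22 \<in> span (S kc)" using s1 g00 by (simp add: span_add span_scale span_diff)
  have E5': "E (3/5) (-4/5) = outer (v4 (-1) (\<rho>*(3/5)) (\<rho>*(-4/5)) a) (v4 (-1) (\<rho>*(3/5)) (\<rho>*(-4/5)) a)"
    using Eo[of "3/5" "-4/5"] by simp
  have s5: "E (3/5) (-4/5) \<in> span (S kc)" by (auto intro!: span_base E_in)
  have "G12 = (25/(24*\<rho>*\<rho>)) *\<^sub>R (E (3/5) (4/5) - E (3/5) (-4/5) + (8*\<rho>/5) *\<^sub>R G02)"
    unfolding E5 E5' G12_def G02_def p_def e1_def e2_def using \<rho>
    by (simp add: ten_eq all4 outer_def field_simps)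
  then have g12: "G12 \<in> span (S kc)" using s1 s5 g02 by (simp add: span_add span_scale span_diff)
  fix T assume "T \<in> target (v4 k0 0 0 c)"
  then have sy: "symmetric_tensor T" and ct: "contr kc T = 0" by (auto simp: target_def kc_def)
  have t3: "T$3$n = -a * T$0$n" for n
  proof -
    have "k0 * T$0$n + c * T$3$n = 0" using ct by (simp add: vec_eq_iff contr_c kc_def)
    then have "c * (a * T$0$n + T$3$n) = 0" by (simp add: ka algebra_simps)
    then show ?thesis using cpos by simp
  qed
  have sym: "T$i$j = T$j$i" for i j using sy by (simp add: symmetric_tensor_def)
  have f: "T$3$0 = -a*T$0$0" "T$3$1 = -a*T$0$1" "T$3$2 = -a*T$0$2" "T$3$3 = a*a*T$0$0"
       "T$0$3 = -a*T$0$0" "T$1$3 = -a*T$0$1" "T$2$3 = -a*T$0$2"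
       "T$1$0 = T$0$1" "T$2$0 = T$0$2" "T$2$1 = T$1$2"
    using t3 sym[of 0 3] sym[of 1 3] sym[of 2 3] sym[of 1 0] sym[of 2 0] sym[of 2 1] t3[of 3] by auto
  have eqT: "T = T$0$0 *\<^sub>R G00 + T$0$1 *\<^sub>R G01 + T$0$2 *\<^sub>R G02 + T$1$1 *\<^sub>R G11 + T$1$2 *\<^sub>R G12 + T$2$2 *\<^sub>R G22"
    unfolding G00_def G01_def G02_def G11_def G12_def G22_def p_def e1_def e2_def
    by (simp add: ten_eq all4 outer_def f)
  show "T \<in> span (S (v4 k0 0 0 c))" unfolding kc_def[symmetric]
    by (subst eqT) (intro span_add span_scale g00 g01 g02 g11 g12 g22)
qed


lemma contr_add: "contr k (x+y) = contr k x + contr k y"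
  by (simp add: vec_eq_iff contr_c algebra_simps)
lemma contr_scale: "contr k (c *\<^sub>R x) = c *\<^sub>R contr k x"
  by (simp add: vec_eq_iff contr_c algebra_simps)
lemma contr_zero: "contr k 0 = 0"
  by (simp add: vec_eq_iff contr_c)

lemma target_subspace: "subspace (target k)"
  unfolding subspace_def target_def
  by (auto simp: symmetric_tensor_def contr_add contr_scale contr_zero)

lemma S_sub_target: "S k \<subseteq> target k"
proof
  fix T assume T: "T \<in> S k"
  then have "contr k T = 0" by (rule part1)
  moreover have "symmetric_tensor T" using T unfolding S_def
    by (auto simp: symmetric_tensor_def Tud_def mult.commute)
  ultimately show "T \<in> target k" by (simp add: target_def)
qed

lemma span_S_sub: "span (S k) \<subseteq> target k"
  by (rule span_minimal[OF S_sub_target target_subspace])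

lemma part3: assumes "spacelike k" shows "span (S k) = target k"
proof -
  obtain m k0 c where m: "good m" "m *v v4 k0 0 0 c = k" "\<bar>k0\<bar> < c" using reduce[OF assms] by blast
  have "span (S (v4 k0 0 0 c)) = target (v4 k0 0 0 c)"
    using canon[OF m(3)] span_S_sub by blast
  then have "span (S (m *v v4 k0 0 0 c)) = target (m *v v4 k0 0 0 c)" by (rule g_span[OF m(1)])
  then show ?thesis using m(2) by simp
qed

lemma part4a: assumes "null k" "k \<noteq> 0"
  shows "span (S k) = range (\<lambda>c::real. c *\<^sub>R XX k)"
proof -
  have k0: "k$0 \<noteq> 0" using null_k0 assms by blast
  have "span (S k) = range (\<lambda>c. c *\<^sub>R ((1/(k$0)^2) *\<^sub>R XX k))" unfolding null_S[OF assms] span_singleton ..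
  also have "\<dots> = range (\<lambda>c::real. c *\<^sub>R XX k)"
  proof (intro set_eqI iffI)
    fix x assume "x \<in> range (\<lambda>c. c *\<^sub>R ((1/(k$0)^2) *\<^sub>R XX k))"
    then obtain c where "x = c *\<^sub>R ((1/(k$0)^2) *\<^sub>R XX k)" by blast
    then have "x = (c/(k$0)^2) *\<^sub>R XX k" by simp
    then show "x \<in> range (\<lambda>c::real. c *\<^sub>R XX k)" by blast
  next
    fix x assume "x \<in> range (\<lambda>c::real. c *\<^sub>R XX k)"
    then obtain c where "x = c *\<^sub>R XX k" by blast
    then have "x = (c*(k$0)^2) *\<^sub>R ((1/(k$0)^2) *\<^sub>R XX k)" using k0 by simp
    then show "x \<in> range (\<lambda>c. c *\<^sub>R ((1/(k$0)^2) *\<^sub>R XX k))" by blast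
  qed
  finally show ?thesis .
qed

lemma part4b: assumes "null k"
  shows "mdot (raise (contr l (c *\<^sub>R XX k))) (raise (contr l (c *\<^sub>R XX k))) \<le> 0"
proof -
  have "raise (contr l (c *\<^sub>R XX k)) = (c * mdot l k) *\<^sub>R k"
    by (simp add: vec4_eq contr_c XX_def md algebra_simps)
  moreover have "mdot (r *\<^sub>R k) (r *\<^sub>R k) = r*r*mdot k k" for r by (simp add: md algebra_simps)
  ultimately show ?thesis using assms by (simp add: null_def)
qed

theorem mainTheorem11:
  fixes k :: "real^4"
  assumes "k \<noteq> 0"
  shows "(\<forall>T\<in>S k. contr k T = 0)
       \<and> (timelike k \<longrightarrow> S k = {})
       \<and> (spacelike k \<longrightarrow> span (S k) = {T. symmetric_tensor T \<and> contr k T = 0})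
       \<and> (null k \<longrightarrow>
            span (S k) = range (\<lambda>c::real. c *\<^sub>R (\<chi> mu nu. (lower k) $ mu * (lower k) $ nu))
          \<and> (\<forall>l T. null l \<longrightarrow> T \<in> span (S k) \<longrightarrow>
                 mdot (raise (contr l T)) (raise (contr l T)) \<le> 0))"
proof (intro conjI impI allI ballI)
  fix T assume "T \<in> S k" then show "contr k T = 0" by (rule part1)
next
  assume "timelike k" then show "S k = {}" by (rule part2)
next
  assume "spacelike k" then show "span (S k) = {T. symmetric_tensor T \<and> contr k T = 0}"
    using part3 unfolding target_def by blast
next
  assume "null k"
  then show "span (S k) = range (\<lambda>c::real. c *\<^sub>R (\<chi> mu nu. (lower k) $ mu * (lower k) $ nu))"
    using part4a[OF _ assms] unfolding XX_def by blast
next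
  fix l T assume nk: "null k" and "null l" and T: "T \<in> span (S k)"
  then obtain c where "T = c *\<^sub>R XX k" using part4a[OF nk assms] by blast
  then show "mdot (raise (contr l T)) (raise (contr l T)) \<le> 0" using part4b[OF nk] by simp
qed

end
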